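(* Let $n\ge 0$ and $m\ge 2$ be integers with $n\ge1$ or $m\ge3$, let $N=m^{2^n}$, and let $\mathbb{A}$ be the structure defined in the context. Then there is no polymorphism $t:A^{N}\to A$ of $\mathbb{A}$ such that $t(a,n,n,\dots,n)=t(n,a,n,\dots,n)=\dots=t(n,\dots,n,a)=n$ (i.e., $t$ returns $n$ whenever exactly one argument equals $a$ and all other arguments equal $n$).
   Context: Fix integers $n\ge 0$ and $m\ge 2$. Let $A=\{a,0,1,\dots,n\}$. For $i\in\{0,\dots,n+1\}$ let $A_i=\{a,0,1,\dots,i-1\}$, so $A_0=\{a\}$ and $A_{n+1}=A$. For $i\in\{0,\dots,n\}$ let $S_i\subseteq A^{m+1}$ be the relation $$S_i=\Big(A_i\times\{a,i\}^m\setminus\{(a,i,i,\dots,i)\}\Big)\cup\{(j,j,\dots,j)\in A^{m+1}: i<j\le n\}.$$ Let $\mathbb{A}$ be the relational structure with universe $A$ whose relations are $S_0,\dots,S_n$ (each of arity $m+1$) together with every nonempty subset $X\subseteq A$ as a unary relation. A polymorphism of $\mathbb{A}$ is an operation $t:A^k\to A$ compatible with all these relations, where compatibility with a relation $R$ means that applying $t$ coordinatewise to any $k$ tuples of $R$ yields a tuple of $R$. *)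

theory Defs
  imports Main
begin

text \<open>Elements of the universe: the special element a is None, the number i is Some i.
  Tuples are lists; an operation of arity k is a function on lists of length k.\<close>

definition univ :: "nat \<Rightarrow> nat option set" where
  "univ n = insert None (Some ` {0..n})"

definition Aset :: "nat \<Rightarrow> nat option set" where
  "Aset i = insert None (Some ` {0..<i})"

definition Srel :: "nat \<Rightarrow> nat \<Rightarrow> nat \<Rightarrow> nat option list set" where
  "Srel n m i =
     {xs. length xs = m + 1 \<and> hd xs \<in> Aset i \<and> (\<forall>x\<in>set (tl xs). x \<in> {None, Some i})
          \<and> xs \<noteq> None # replicate m (Some i)}
     \<union> {replicate (m + 1) (Some j) | j. i < j \<and> j \<le> n}"

definition compatible :: "nat \<Rightarrow> (nat option list \<Rightarrow> nat option) \<Rightarrow> nat \<Rightarrow> nat option list set \<Rightarrow> bool" where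
  "compatible k t r R \<longleftrightarrow>
     (\<forall>rs :: nat \<Rightarrow> nat option list. (\<forall>i<k. rs i \<in> R) \<longrightarrow>
        map (\<lambda>j. t (map (\<lambda>i. rs i ! j) [0..<k])) [0..<r] \<in> R)"

definition polymorphism :: "nat \<Rightarrow> nat \<Rightarrow> nat \<Rightarrow> (nat option list \<Rightarrow> nat option) \<Rightarrow> bool" where
  "polymorphism n m k t \<longleftrightarrow>
     (\<forall>i\<le>n. compatible k t (m + 1) (Srel n m i)) \<and>
     (\<forall>X. X \<noteq> {} \<and> X \<subseteq> univ n \<longrightarrow> compatible k t 1 {[x] | x. x \<in> X})"

end

theory Submission
  imports Defs
begin

definition good :: "(nat option list \<Rightarrow> nat option) \<Rightarrow> nat \<Rightarrow> nat \<Rightarrow> nat set \<Rightarrow> bool" where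
  "good t N K T \<longleftrightarrow> (\<forall>u. length u = N \<longrightarrow> (\<forall>x\<in>set u. x = None \<or> (\<exists>v\<in>T. x = Some v)) \<longrightarrow>
      card {k. k < N \<and> u ! k = None} \<le> K \<longrightarrow> t u \<noteq> None)"

lemma good_mono:
  assumes "good t N K T" "T' \<subseteq> T" "K' \<le> K"
  shows "good t N K' T'"
  unfolding good_def
proof (intro allI impI)
  fix u :: "nat option list"
  assume "length u = N" "\<forall>x\<in>set u. x = None \<or> (\<exists>v\<in>T'. x = Some v)"
    "card {k. k < N \<and> u ! k = None} \<le> K'"
  moreover have "\<forall>x\<in>set u. x = None \<or> (\<exists>v\<in>T. x = Some v)" using calculation(2) assms(2) by blast
  moreover have "card {k. k < N \<and> u ! k = None} \<le> K" using calculation(3) assms(3) by linarith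
  ultimately show "t u \<noteq> None" using assms(1) unfolding good_def by blast
qed

lemma split_set:
  fixes Y :: "nat set"
  assumes "finite Y" "card Y \<le> m * K"
  shows "\<exists>f. (\<forall>k\<in>Y. f k < m) \<and> (\<forall>s. card {k\<in>Y. f k = s} \<le> K)"
  using assms
proof (induction m arbitrary: Y)
  case 0
  then have "Y = {}" by simp
  then show ?case by simp
next
  case (Suc m)
  obtain Z where Z: "Z \<subseteq> Y" "card Z \<le> K" "card (Y - Z) \<le> m * K"
  proof (cases "card Y \<le> K")
    case True
    then show ?thesis using that[of Y] by simp
  next
    case False
    then have "K \<le> card Y" by simp
    then obtain Z where "Z \<subseteq> Y" "card Z = K"
      using obtain_subset_with_card_n by metis
    moreover have "card (Y - Z) = card Y - K"
      using calculation Suc.prems(1) by (simp add: card_Diff_subset finite_subset)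
    ultimately show ?thesis using that Suc.prems(2) by simp
  qed
  obtain f where f1: "\<forall>k\<in>Y - Z. f k < m" and f2: "\<forall>s. card {k\<in>Y - Z. f k = s} \<le> K"
    using Suc.IH[of "Y - Z"] Suc.prems(1) Z(3) by auto
  define g where "g k = (if k \<in> Z then m else f k)" for k
  have "\<forall>k\<in>Y. g k < Suc m" using f1 g_def by (simp add: less_SucI)
  moreover have "card {k\<in>Y. g k = s} \<le> K" for s
  proof (cases "s = m")
    case True
    have "{k\<in>Y. g k = s} \<subseteq> Z" using f1 True g_def by auto
    moreover have "finite Z" using Suc.prems(1) Z(1) finite_subset by blast
    ultimately have "card {k\<in>Y. g k = s} \<le> card Z" by (rule card_mono[rotated])
    then show ?thesis using Z(2) by simp
  next
    case False
    have "{k\<in>Y. g k = s} \<subseteq> {k\<in>Y - Z. f k = s}" using False g_def by auto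
    moreover have "finite {k\<in>Y - Z. f k = s}" using Suc.prems(1) by simp
    ultimately show ?thesis using f2 card_mono order_trans by metis
  qed
  ultimately show ?case by blast
qed

lemma upt_split: "[0..<m + 1] = 0 # map Suc [0..<m]"
  by (simp add: map_Suc_upt upt_conv_Cons del: upt_Suc)

lemma map_upt_split: "map (f :: nat \<Rightarrow> 'a) [0..<m + 1] = f 0 # map (\<lambda>s. f (Suc s)) [0..<m]"
  by (simp only: upt_split list.map map_map o_def)

lemma step:
  assumes poly: "polymorphism n m N t" and iN: "i \<le> n" and H: "H \<subseteq> {i<..n}"
    and L: "L \<subseteq> {0..<i}" and g: "good t N K (insert i H)"
  shows "good t N (m * K) (L \<union> H)"
  unfolding good_def
proof (intro allI impI)
  fix u :: "nat option list"
  assume len: "length u = N" and vals: "\<forall>x\<in>set u. x = None \<or> (\<exists>v\<in>L \<union> H. x = Some v)"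
    and c: "card {k. k < N \<and> u ! k = None} \<le> m * K"
  define Y where "Y = {k. k < N \<and> u ! k = None}"
  have finY: "finite Y" unfolding Y_def by simp
  obtain f where f1: "\<forall>k\<in>Y. f k < m" and f2: "\<forall>s. card {k\<in>Y. f k = s} \<le> K"
    using split_set[OF finY, of m K] c unfolding Y_def[symmetric] by blast
  have uk: "u ! k = None \<or> (\<exists>v\<in>L \<union> H. u ! k = Some v)" if "k < N" for k
    using vals len that by auto
  define r where "r s = map (\<lambda>k. if u ! k = None then (if f k = s then None else Some i)
       else if the (u ! k) < i then Some i else u ! k) [0..<N]" for s
  have lenr: "length (r s) = N" for s by (simp add: r_def)
  have rnth: "r s ! k = (if u ! k = None then (if f k = s then None else Some i)
       else if the (u ! k) < i then Some i else u ! k)" if "k < N" for s k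
    using that by (simp add: r_def)
  have rgood: "t (r s) \<noteq> None" for s
  proof -
    have "\<forall>x\<in>set (r s). x = None \<or> (\<exists>v\<in>insert i H. x = Some v)"
    proof
      fix x assume "x \<in> set (r s)"
      then obtain k where k: "k < N" "x = r s ! k" by (metis in_set_conv_nth lenr)
      show "x = None \<or> (\<exists>v\<in>insert i H. x = Some v)"
      proof (cases "u ! k = None")
        case True then show ?thesis using k rnth by auto
      next
        case False
        then have "\<exists>v\<in>L \<union> H. u ! k = Some v" using uk[OF k(1)] by (metis (no_types))
        then obtain v where v: "v \<in> L \<union> H" "u ! k = Some v" by blast
        show ?thesis
        proof (cases "v < i")
          case True then show ?thesis using k rnth v by auto
        next
          case False
          then have "v \<in> H" using v L by auto
          then show ?thesis using k rnth v False by auto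
        qed
      qed
    qed
    moreover have "{k. k < N \<and> r s ! k = None} = {k\<in>Y. f k = s}"
      unfolding Y_def using rnth by (auto split: if_splits)
    ultimately show ?thesis using g f2 lenr unfolding good_def by metis
  qed
  show "t u \<noteq> None"
  proof
    assume tu: "t u = None"
    have comp: "compatible N t (m + 1) (Srel n m i)" using poly iN by (simp add: polymorphism_def)
    define rs where "rs l = u ! l # map (\<lambda>s. r s ! l) [0..<m]" for l
    have cols: "rs l \<in> Srel n m i" if l: "l < N" for l
    proof (cases "u ! l = None")
      case True
      have fl: "f l < m" using f1 True l Y_def by auto
      have rs: "rs l = None # map (\<lambda>s. if f l = s then None else Some i) [0..<m]"
        unfolding rs_def using rnth[OF l] True by simp
      have ne: "map (\<lambda>s. if f l = s then None else Some i) [0..<m] \<noteq> replicate m (Some i)"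
      proof
        assume "map (\<lambda>s. if f l = s then None else Some i) [0..<m] = replicate m (Some i)"
        then have "(map (\<lambda>s. if f l = s then None else Some i) [0..<m]) ! f l = replicate m (Some i) ! f l"
          by simp
        then show False using fl by simp
      qed
      show ?thesis unfolding Srel_def rs using ne by (auto simp: Aset_def)
    next
      case False
      then have "\<exists>v\<in>L \<union> H. u ! l = Some v" using uk[OF l] by (metis (no_types))
      then obtain v where v: "v \<in> L \<union> H" "u ! l = Some v" by blast
      show ?thesis
      proof (cases "v < i")
        case True
        have rs: "rs l = Some v # replicate m (Some i)"
          unfolding rs_def using rnth[OF l] v True by (simp add: map_replicate_const)
        show ?thesis unfolding Srel_def rs using True by (auto simp: Aset_def)
      next
        case vi: False
        then have "v \<in> H" using v L by auto
        then have vH: "i < v" "v \<le> n" using H by auto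
        have rs: "rs l = replicate (m + 1) (Some v)"
          unfolding rs_def using rnth[OF l] v vi by (simp add: map_replicate_const)
        show ?thesis unfolding Srel_def rs using vH by blast
      qed
    qed
    have res: "map (\<lambda>j. t (map (\<lambda>l. rs l ! j) [0..<N])) [0..<m + 1] \<in> Srel n m i"
      using comp cols unfolding compatible_def by blast
    have r0a: "map (\<lambda>l. rs l ! 0) [0..<N] = map (\<lambda>l. u ! l) [0..<N]" unfolding rs_def by simp
    have r0b: "map (\<lambda>l. u ! l) [0..<N] = u" using map_nth[of u] len by simp
    have r0: "map (\<lambda>l. rs l ! 0) [0..<N] = u" by (rule trans[OF r0a r0b])
    have rS: "map (\<lambda>l. rs l ! Suc s) [0..<N] = r s" if "s < m" for s
    proof -
      have a: "map (\<lambda>l. rs l ! Suc s) [0..<N] = map (\<lambda>l. r s ! l) [0..<N]"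
        unfolding rs_def using that by simp
      have b: "map (\<lambda>l. r s ! l) [0..<N] = r s" using map_nth[of "r s"] lenr[of s] by simp
      show ?thesis by (rule trans[OF a b])
    qed
    have "map (\<lambda>j. t (map (\<lambda>l. rs l ! j) [0..<N])) [0..<m + 1]
        = t (map (\<lambda>l. rs l ! 0) [0..<N]) # map (\<lambda>s. t (map (\<lambda>l. rs l ! Suc s) [0..<N])) [0..<m]"
      by (rule map_upt_split)
    also have "\<dots> = None # map (\<lambda>s. t (r s)) [0..<m]"
      using r0 rS tu by (simp del: upt_Suc)
    finally have res2: "None # map (\<lambda>s. t (r s)) [0..<m] \<in> Srel n m i" using res by simp
    define xs where "xs = map (\<lambda>s. t (r s)) [0..<m]"
    have notB: "None # xs \<notin> {replicate (m + 1) (Some j) | j. i < j \<and> j \<le> n}"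
      by (simp add: Collect_mono_iff)
    have "None # xs \<in> {xs. length xs = m + 1 \<and> hd xs \<in> Aset i \<and> (\<forall>x\<in>set (tl xs). x \<in> {None, Some i})
          \<and> xs \<noteq> None # replicate m (Some i)}"
      using res2 notB unfolding Srel_def xs_def[symmetric] by blast
    then have tlp: "\<forall>x\<in>set xs. x \<in> {None, Some i}" and nex: "xs \<noteq> replicate m (Some i)"
      by simp_all
    have "\<forall>x\<in>set xs. x = Some i" using tlp rgood unfolding xs_def by auto
    then have h1: "replicate (length xs) (Some i) = xs"
      by (rule replicate_length_same)
    have h2: "length xs = m" unfolding xs_def by simp
    have "xs = replicate m (Some i)" using h1[symmetric] unfolding h2 .
    then show False using nex by blast
  qed
qed

lemma E:
  assumes poly: "polymorphism n m N t"
  shows "i \<le> n \<Longrightarrow> H \<subseteq> {i..n} \<Longrightarrow> good t N K ({0..<i} \<union> H) \<Longrightarrow> good t N (K * m ^ (2 ^ i - 1)) H"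
proof (induction i arbitrary: H K)
  case 0
  then show ?case by simp
next
  case (Suc i)
  have eq: "{0..<Suc i} \<union> H = {0..<i} \<union> insert i H" by auto
  have Hs: "insert i H \<subseteq> {i..n}" using Suc.prems by auto
  have g0: "good t N K ({0..<i} \<union> insert i H)" using Suc.prems(3) eq by simp
  have g1: "good t N (K * m ^ (2 ^ i - 1)) (insert i H)"
    using Suc.IH[OF Suc_leD[OF Suc.prems(1)] Hs g0] by blast
  have g2: "good t N (m * (K * m ^ (2 ^ i - 1))) ({0..<i} \<union> H)"
  proof -
    have "H \<subseteq> {i<..n}" using Suc.prems(2) by auto
    then show ?thesis using step[OF poly _ _ _ g1] Suc.prems(1) by simp
  qed
  have g3: "good t N (m * (K * m ^ (2 ^ i - 1)) * m ^ (2 ^ i - 1)) H"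
  proof -
    have "H \<subseteq> {i..n}" using Suc.prems(2) by auto
    then show ?thesis using Suc.IH[OF Suc_leD[OF Suc.prems(1)] _ g2] by blast
  qed
  have p1: "(2::nat) ^ i \<ge> 1" by simp
  have p2: "(2::nat) ^ Suc i = 2 ^ i + 2 ^ i" by simp
  have e: "(2 ^ i - 1) + (2 ^ i - 1) + 1 = 2 ^ Suc i - (1::nat)"
    using p1 p2 by linarith
  have "m * (K * m ^ (2 ^ i - 1)) * m ^ (2 ^ i - 1) = K * m ^ ((2 ^ i - 1) + (2 ^ i - 1) + 1)"
    by (simp only: power_add power_one_right mult_ac)
  then have eq2: "m * (K * m ^ (2 ^ i - 1)) * m ^ (2 ^ i - 1) = K * m ^ (2 ^ Suc i - 1)"
    by (simp only: e)
  show ?case using g3 unfolding eq2 .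
qed

theorem mainTheorem3:
  fixes n m N :: nat
  assumes "m \<ge> 2" and "n \<ge> 1 \<or> m \<ge> 3" and "N = m ^ (2 ^ n)"
  shows "\<not> (\<exists>t. polymorphism n m N t \<and>
            (\<forall>i<N. t (map (\<lambda>j. if j = i then None else Some n) [0..<N]) = Some n))"
proof
  assume "\<exists>t. polymorphism n m N t \<and>
            (\<forall>i<N. t (map (\<lambda>j. if j = i then None else Some n) [0..<N]) = Some n)"
  then obtain t where poly: "polymorphism n m N t"
    and hyp: "\<forall>i<N. t (map (\<lambda>j. if j = i then None else Some n) [0..<N]) = Some n" by blast
  have unary: "t (map (\<lambda>l. x) [0..<N]) = x" if "x \<in> univ n" for x
  proof -
    have x1: "{x} \<noteq> {} \<and> {x} \<subseteq> univ n" using that by simp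
    have "\<forall>X. X \<noteq> {} \<and> X \<subseteq> univ n \<longrightarrow> compatible N t 1 {[x] | x. x \<in> X}"
      using poly unfolding polymorphism_def by (rule conjunct2)
    then have "compatible N t 1 {[y] | y. y \<in> {x}}" using x1 by blast
    then have "map (\<lambda>j. t (map (\<lambda>i. [x] ! j) [0..<N])) [0..<1] \<in> {[y] | y. y \<in> {x}}"
      unfolding compatible_def by (drule_tac x="\<lambda>l. [x]" in spec) auto
    then show ?thesis by simp
  qed
  have base: "good t N 1 {n}"
    unfolding good_def
  proof (intro allI impI)
    fix u :: "nat option list"
    assume len: "length u = N" and vals: "\<forall>x\<in>set u. x = None \<or> (\<exists>v\<in>{n}. x = Some v)"
      and c: "card {k. k < N \<and> u ! k = None} \<le> 1"
    have uk: "u ! k = None \<or> u ! k = Some n" if "k < N" for k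
    proof -
      have "u ! k \<in> set u" using len that by simp
      then show ?thesis using vals by blast
    qed
    show "t u \<noteq> None"
    proof (cases "{k. k < N \<and> u ! k = None} = {}")
      case True
      have nn: "\<forall>k. k < N \<longrightarrow> u ! k \<noteq> None" using True by auto
      have us: "u ! j = Some n" if "j < N" for j
      proof -
        have "u ! j \<noteq> None" using nn that by blast
        then show ?thesis using uk[OF that] by (metis (no_types))
      qed
      have "u = map (\<lambda>l. Some n) [0..<N]"
        by (rule nth_equalityI) (simp_all add: len us)
      then show ?thesis using unary[of "Some n"] by (simp add: univ_def)
    next
      case False
      then obtain k where k: "k < N" "u ! k = None" by auto
      have fin: "finite {k. k < N \<and> u ! k = None}" by simp
      have c1: "card {k. k < N \<and> u ! k = None} \<le> Suc 0" using c by simp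
      have all: "\<forall>a1\<in>{k. k < N \<and> u ! k = None}. \<forall>a2\<in>{k. k < N \<and> u ! k = None}. a1 = a2"
        using card_le_Suc0_iff_eq[OF fin] c1 by blast
      have "u ! j = (if j = k then None else Some n)" if "j < N" for j
      proof (cases "j = k")
        case True then show ?thesis using k by simp
      next
        case False
        have "u ! j \<noteq> None"
        proof
          assume "u ! j = None"
          then have "j \<in> {k. k < N \<and> u ! k = None}" using that by simp
          moreover have "k \<in> {k. k < N \<and> u ! k = None}" using k by simp
          ultimately have "j = k" using all by blast
          then show False using False by simp
        qed
        then show ?thesis using uk[OF that] False by (metis (no_types))
      qed
      then have "u = map (\<lambda>j. if j = k then None else Some n) [0..<N]"
        by (intro nth_equalityI) (simp_all add: len)
      then show ?thesis using hyp k by simp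
    qed
  qed
  have g1: "good t N (m * 1) ({0..<n} \<union> {})"
    by (rule step[OF poly]) (use base in simp_all)
  have g2: "good t N (m * 1 * m ^ (2 ^ n - 1)) {}"
    by (rule E[OF poly]) (use g1 in simp_all)
  have p1: "(1::nat) \<le> 2 ^ n" by simp
  have "m * 1 * m ^ (2 ^ n - 1) = m ^ (1 + (2 ^ n - 1))" by (simp only: power_add power_one_right mult_1_right)
  also have "\<dots> = N" using assms(3) p1 by simp
  finally have g3: "good t N N {}" using g2 by simp
  have cN: "card {k. k < N \<and> map (\<lambda>l. (None :: nat option)) [0..<N] ! k = None} \<le> N"
  proof -
    have "{k. k < N \<and> map (\<lambda>l. (None :: nat option)) [0..<N] ! k = None} \<subseteq> {..<N}" by auto
    then show ?thesis using card_mono[of "{..<N}"] by fastforce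
  qed
  have vN: "\<forall>x\<in>set (map (\<lambda>l. (None :: nat option)) [0..<N]). x = None \<or> (\<exists>v\<in>{}. x = Some v)"
    by simp
  have "t (map (\<lambda>l. None) [0..<N]) \<noteq> None"
  proof -
    have l: "length (map (\<lambda>l. (None :: nat option)) [0..<N]) = N" by simp
    show ?thesis using g3[unfolded good_def] l vN cN by blast
  qed
  moreover have "t (map (\<lambda>l. None) [0..<N]) = None" using unary[of None] by (simp add: univ_def)
  ultimately show False by simp
qed

end
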